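(* Let $X=\mathbb S^{n_1}\times\cdots\times\mathbb S^{n_l}$ with $1\le n_1<\cdots<n_l$, and let $f:X\to X$ be a $C^1$ quasi-unipotent map such that $a_{n_1},\ldots,a_{n_l}$ are the basic eigenvalues of $f_*$ (so each $a_{n_i}=\pm1$). Then: (a) if $(-1)^{n_i}a_{n_i}=1$ for all $1\le i\le l$, then $\mathrm{MPer}_L(f)=\{1\}$; (b) if $(-1)^{n_i}a_{n_i}=-1$ for some $1\le i\le l$, then $\mathrm{MPer}_L(f)=\emptyset$.
   Context: Basic eigenvalues: integers $a_{n_1},\ldots,a_{n_l}$ such that for every $k$ the induced map $f_{*k}$ on $H_k(X;\mathbb Q)$ is diagonal in a suitable basis with diagonal entries (with multiplicity) the products $a_{n_{i_1}}\cdots a_{n_{i_s}}$ over all subsets $\{i_1<\cdots<i_s\}$ with $n_{i_1}+\cdots+n_{i_s}=k$. A map is quasi-unipotent if all eigenvalues of all $f_{*k}$ are roots of unity. The Lefschetz zeta function is $\zeta_f(t)=\exp(\sum_{m\ge1}L(f^m)t^m/m)$ with $L(f)=\sum_k(-1)^k\operatorname{trace} f_{*k}$. If $\zeta_f(t)\ne1$, it can be written (possibly in several ways) as a finite product $\zeta_f(t)=\prod_{i=1}^{N}(1+\Delta_i t^{r_i})^{m_i}$ with $\Delta_i\in\{\pm1\}$, $r_i$ positive integers and $m_i$ nonzero integers; the minimal set of Lefschetz periods $\mathrm{MPer}_L(f)$ is the intersection of the sets $\{r_1,\ldots,r_N\}$ over all such representations. If $\zeta_f(t)=1$, $\mathrm{MPer}_L(f):=\emptyset$.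 *)

theory Defs
  imports "HOL-Analysis.Analysis" "HOL-Homology.Homology" "HOL-Computational_Algebra.Formal_Power_Series"
    "HOL-Library.Multiset"
begin

text \<open>H_k(X;Q) = H_k(X;Z) tensor Q. A Q-basis of H tensor Q is represented (after scaling)
  by elements b 0, ..., b (r-1) of the abelian group G which are linearly independent
  modulo torsion and span G modulo torsion (every x has a nonzero multiple in their span).\<close>

definition qindep :: "('a, 'm) monoid_scheme \<Rightarrow> (nat \<Rightarrow> 'a) \<Rightarrow> nat \<Rightarrow> bool" where
  "qindep G b r \<longleftrightarrow> (\<forall>c :: nat \<Rightarrow> int.
     (\<exists>t::nat. t > 0 \<and> (finprod G (\<lambda>i. b i [^]\<^bsub>G\<^esub> c i) {..<r}) [^]\<^bsub>G\<^esub> t = \<one>\<^bsub>G\<^esub>)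
       \<longrightarrow> (\<forall>i<r. c i = 0))"

definition qspan :: "('a, 'm) monoid_scheme \<Rightarrow> (nat \<Rightarrow> 'a) \<Rightarrow> nat \<Rightarrow> bool" where
  "qspan G b r \<longleftrightarrow> (\<forall>x\<in>carrier G. \<exists>t::nat. \<exists>c :: nat \<Rightarrow> int. t > 0 \<and>
     x [^]\<^bsub>G\<^esub> t = finprod G (\<lambda>i. b i [^]\<^bsub>G\<^esub> c i) {..<r})"

definition qbasis :: "('a, 'm) monoid_scheme \<Rightarrow> (nat \<Rightarrow> 'a) \<Rightarrow> nat \<Rightarrow> bool" where
  "qbasis G b r \<longleftrightarrow> (\<forall>i<r. b i \<in> carrier G) \<and> qindep G b r \<and> qspan G b r"

definition qcoords :: "('a, 'm) monoid_scheme \<Rightarrow> (nat \<Rightarrow> 'a) \<Rightarrow> nat \<Rightarrow> 'a \<Rightarrow> nat \<Rightarrow> rat" where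
  "qcoords G b r x = (THE q. (\<forall>i\<ge>r. q i = 0) \<and>
     (\<exists>t::nat. \<exists>c :: nat \<Rightarrow> int. t > 0 \<and>
        x [^]\<^bsub>G\<^esub> t = finprod G (\<lambda>i. b i [^]\<^bsub>G\<^esub> c i) {..<r} \<and>
        (\<forall>i<r. q i = of_int (c i) / of_nat t)))"

definition qmatrix :: "('a, 'm) monoid_scheme \<Rightarrow> (nat \<Rightarrow> 'a) \<Rightarrow> nat \<Rightarrow> ('a \<Rightarrow> 'a) \<Rightarrow> nat \<Rightarrow> nat \<Rightarrow> rat" where
  "qmatrix G b r h i j = qcoords G b r (h (b j)) i"

definition qrank :: "('a, 'm) monoid_scheme \<Rightarrow> nat" where
  "qrank G = (SOME r. \<exists>b. qbasis G b r)"

definition qbas :: "('a, 'm) monoid_scheme \<Rightarrow> nat \<Rightarrow> 'a" where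
  "qbas G = (SOME b. qbasis G b (qrank G))"

definition qtrace :: "('a, 'm) monoid_scheme \<Rightarrow> ('a \<Rightarrow> 'a) \<Rightarrow> rat" where
  "qtrace G h = (\<Sum>j<qrank G. qmatrix G (qbas G) (qrank G) h j j)"

definition qeigenvalue :: "('a, 'm) monoid_scheme \<Rightarrow> ('a \<Rightarrow> 'a) \<Rightarrow> complex \<Rightarrow> bool" where
  "qeigenvalue G h ev \<longleftrightarrow> (\<exists>v :: nat \<Rightarrow> complex. (\<exists>i<qrank G. v i \<noteq> 0) \<and>
     (\<forall>i<qrank G. (\<Sum>j<qrank G. of_rat (qmatrix G (qbas G) (qrank G) h i j) * v j) = ev * v i))"

abbreviation fstar :: "int \<Rightarrow> 'a topology \<Rightarrow> ('a \<Rightarrow> 'a) \<Rightarrow> 'a chain set \<Rightarrow> 'a chain set" where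
  "fstar k X f \<equiv> hom_induced k X {} X {} f"

definition quasi_unipotent :: "'a topology \<Rightarrow> ('a \<Rightarrow> 'a) \<Rightarrow> bool" where
  "quasi_unipotent X f \<longleftrightarrow> (\<forall>k::nat. \<forall>ev. qeigenvalue (homology_group (int k) X) (fstar (int k) X f) ev
      \<longrightarrow> (\<exists>m::nat. m > 0 \<and> ev ^ m = 1))"

definition basic_eigenvalues ::
  "'a topology \<Rightarrow> ('a \<Rightarrow> 'a) \<Rightarrow> nat \<Rightarrow> (nat \<Rightarrow> nat) \<Rightarrow> (nat \<Rightarrow> int) \<Rightarrow> bool" where
  "basic_eigenvalues X f l n a \<longleftrightarrow> (\<forall>k::nat.
     \<exists>b r (d :: nat \<Rightarrow> rat).
       qbasis (homology_group (int k) X) b r \<and>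
       (\<forall>i<r. \<forall>j<r. qmatrix (homology_group (int k) X) b r (fstar (int k) X f) i j
                      = (if i = j then d j else 0)) \<and>
       mset (map d [0..<r]) =
         image_mset (\<lambda>S. of_int (\<Prod>i\<in>S. a i))
           (mset_set {S. S \<subseteq> {..<l} \<and> (\<Sum>i\<in>S. n i) = k}))"

definition lefschetz_number :: "'a topology \<Rightarrow> ('a \<Rightarrow> 'a) \<Rightarrow> rat" where
  "lefschetz_number X f =
     (\<Sum>k\<in>{k::nat. qrank (homology_group (int k) X) \<noteq> 0}.
        (-1) ^ k * qtrace (homology_group (int k) X) (fstar (int k) X f))"

definition lefschetz_zeta :: "'a topology \<Rightarrow> ('a \<Rightarrow> 'a) \<Rightarrow> rat fps" where
  "lefschetz_zeta X f = fps_exp 1 oo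
     Abs_fps (\<lambda>m. if m = 0 then 0 else lefschetz_number X (f ^^ m) / of_nat m)"

definition zeta_repr :: "rat fps \<Rightarrow> (int \<times> nat \<times> int) list \<Rightarrow> bool" where
  "zeta_repr z rs \<longleftrightarrow>
     (\<forall>(\<Delta>, r, m)\<in>set rs. (\<Delta> = 1 \<or> \<Delta> = -1) \<and> r > 0 \<and> m \<noteq> 0) \<and>
     z = (\<Prod>(\<Delta>, r, m)\<leftarrow>rs. (1 + fps_const (of_int \<Delta>) * fps_X ^ r) powi m)"

definition MPer_L :: "'a topology \<Rightarrow> ('a \<Rightarrow> 'a) \<Rightarrow> nat set" where
  "MPer_L X f = (if lefschetz_zeta X f = 1 then {}
     else \<Inter> {set (map (\<lambda>(\<Delta>, r, m). r) rs) | rs. zeta_repr (lefschetz_zeta X f) rs})"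

text \<open>The coordinates of R^N (type 'd) are split into blocks blk d; block i has n i + 1
  coordinates, and X is the set of points whose restriction to every block lies on the unit
  sphere, i.e. X = S^(n 0) x ... x S^(n (l-1)) embedded in R^N.\<close>
definition sphere_prod :: "('d::finite \<Rightarrow> nat) \<Rightarrow> nat \<Rightarrow> (real^'d) set" where
  "sphere_prod blk l = {x. \<forall>i<l. (\<Sum>d\<in>{d. blk d = i}. (x $ d)\<^sup>2) = 1}"

definition C1_map_on :: "('a::euclidean_space) set \<Rightarrow> ('a \<Rightarrow> 'a) \<Rightarrow> bool" where
  "C1_map_on S f \<longleftrightarrow> f ` S \<subseteq> S \<and>
     (\<exists>U g (g' :: 'a \<Rightarrow> ('a, 'a) blinfun). open U \<and> S \<subseteq> U \<and>
        (\<forall>x\<in>U. (g has_derivative blinfun_apply (g' x)) (at x)) \<and>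
        continuous_on U g' \<and> (\<forall>x\<in>S. g x = f x))"

end

theory Submission
  imports Defs
begin


context comm_group begin

definition lin :: "(nat \<Rightarrow> 'a) \<Rightarrow> nat \<Rightarrow> (nat \<Rightarrow> int) \<Rightarrow> 'a" where
  "lin b r c = finprod G (\<lambda>i. b i [^] c i) {..<r}"

lemma finprod_lessThan_Suc:
  fixes r :: nat and f :: "nat \<Rightarrow> 'a"
  assumes "\<And>i. i < Suc r \<Longrightarrow> f i \<in> carrier G"
  shows "finprod G f {..<Suc r} = f r \<otimes> finprod G f {..<r}"
  using assms by (simp add: lessThan_Suc Pi_def)

lemma lin_closed: "(\<And>i. i < r \<Longrightarrow> b i \<in> carrier G) \<Longrightarrow> lin b r c \<in> carrier G"
  unfolding lin_def by (intro finprod_closed) auto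

lemma lin_add:
  assumes "\<And>i. i < r \<Longrightarrow> b i \<in> carrier G"
  shows "lin b r (\<lambda>i. c i + d i) = lin b r c \<otimes> lin b r d"
proof -
  have "lin b r (\<lambda>i. c i + d i) = finprod G (\<lambda>i. b i [^] c i \<otimes> b i [^] d i) {..<r}"
    unfolding lin_def by (intro finprod_cong) (auto simp: assms int_pow_mult)
  also have "\<dots> = lin b r c \<otimes> lin b r d"
    unfolding lin_def using assms by (intro finprod_multf) auto
  finally show ?thesis .
qed

lemma finprod_int_pow:
  fixes r :: nat and f :: "nat \<Rightarrow> 'a"
  assumes "\<And>i. i < r \<Longrightarrow> f i \<in> carrier G"
  shows "(finprod G f {..<r}) [^] (z::int) = finprod G (\<lambda>i. f i [^] z) {..<r}"
  using assms
proof (induction r)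
  case 0 then show ?case by simp
next
  case (Suc r)
  have "(finprod G f {..<Suc r}) [^] z = (f r \<otimes> finprod G f {..<r}) [^] z"
    using Suc.prems by (subst finprod_lessThan_Suc) auto
  also have "\<dots> = f r [^] z \<otimes> (finprod G f {..<r}) [^] z"
    using Suc.prems by (intro int_pow_distrib) (auto intro: finprod_closed)
  also have "\<dots> = f r [^] z \<otimes> finprod G (\<lambda>i. f i [^] z) {..<r}"
    using Suc by simp
  also have "\<dots> = finprod G (\<lambda>i. f i [^] z) {..<Suc r}"
    using Suc.prems by (subst finprod_lessThan_Suc) auto
  finally show ?case .
qed

lemma lin_pow_int:
  assumes "\<And>i. i < r \<Longrightarrow> b i \<in> carrier G"
  shows "(lin b r c) [^] (z::int) = lin b r (\<lambda>i. z * c i)"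
proof -
  have "(lin b r c) [^] z = finprod G (\<lambda>i. (b i [^] c i) [^] z) {..<r}"
    unfolding lin_def using assms by (intro finprod_int_pow) auto
  also have "\<dots> = lin b r (\<lambda>i. z * c i)"
    unfolding lin_def using assms
    by (intro finprod_cong) (auto simp: int_pow_pow ac_simps)
  finally show ?thesis .
qed

lemma lin_pow_nat:
  assumes "\<And>i. i < r \<Longrightarrow> b i \<in> carrier G"
  shows "(lin b r c) [^] (t::nat) = lin b r (\<lambda>i. int t * c i)"
proof -
  have "(lin b r c) [^] t = (lin b r c) [^] (int t)"
    by (simp add: int_pow_int)
  also have "\<dots> = lin b r (\<lambda>i. int t * c i)"
    by (rule lin_pow_int[OF assms])
  finally show ?thesis .
qed

lemma qbasis_carr: "qbasis G b r \<Longrightarrow> i < r \<Longrightarrow> b i \<in> carrier G"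
  unfolding qbasis_def by auto

lemma lin_unique:
  assumes B: "qbasis G b r" and eq: "lin b r c = lin b r d" and i: "i < r"
  shows "c i = d i"
proof -
  have carr: "\<And>i. i < r \<Longrightarrow> b i \<in> carrier G" using B qbasis_carr by blast
  have "lin b r (\<lambda>i. (c i - d i) + d i) = lin b r (\<lambda>i. c i - d i) \<otimes> lin b r d"
    by (rule lin_add[OF carr])
  then have "lin b r (\<lambda>i. c i - d i) \<otimes> lin b r d = lin b r d"
    using eq by simp
  then have 1: "lin b r (\<lambda>i. c i - d i) = \<one>"
    using lin_closed[OF carr] by simp
  have 2: "lin b r (\<lambda>i. c i - d i) [^] (1::nat) = \<one>"
    using 1 by simp
  have "\<forall>i<r. c i - d i = 0"
    using B 2 unfolding qbasis_def qindep_def lin_def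
    apply (elim conjE)
    apply (drule spec[where x="\<lambda>i. c i - d i"])
    apply (erule mp)
    apply (rule exI[where x=1])
    by simp
  then show ?thesis using i by simp
qed


lemma qspan_ex:
  assumes "qbasis G b r" "x \<in> carrier G"
  shows "\<exists>t c. t > 0 \<and> x [^] (t::nat) = lin b r c"
  using assms unfolding qbasis_def qspan_def lin_def by blast

lemma pow_eq_coef:
  assumes B: "qbasis G b r" and x: "x \<in> carrier G"
    and t: "x [^] (t::nat) = lin b r c" and s: "x [^] (s::nat) = lin b r d" and i: "i < r"
  shows "c i * int s = d i * int t"
proof -
  have carr: "\<And>i. i < r \<Longrightarrow> b i \<in> carrier G" using B qbasis_carr by blast
  have "x [^] (t * s) = lin b r (\<lambda>i. int s * c i)"
    using nat_pow_pow[OF x, of t s, symmetric] t lin_pow_nat[OF carr] by simp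
  moreover have "x [^] (s * t) = lin b r (\<lambda>i. int t * d i)"
    using nat_pow_pow[OF x, of s t, symmetric] s lin_pow_nat[OF carr] by simp
  ultimately have "lin b r (\<lambda>i. int s * c i) = lin b r (\<lambda>i. int t * d i)"
    by (simp add: mult.commute)
  from lin_unique[OF B this i] show ?thesis by (simp add: mult.commute)
qed

lemma coords_eq:
  assumes B: "qbasis G b r" and x: "x \<in> carrier G" and t0: "t > 0"
    and t: "x [^] (t::nat) = lin b r c"
  shows "qcoords G b r x = (\<lambda>i. if i < r then of_int (c i) / of_nat t else 0)"
  unfolding qcoords_def
proof (rule the_equality)
  show "(\<forall>i\<ge>r. (\<lambda>i. if i < r then of_int (c i) / of_nat t else 0) i = 0) \<and>
    (\<exists>t' c'. 0 < t' \<and> x [^] t' = (\<Otimes>i\<in>{..<r}. b i [^] c' i) \<and>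
       (\<forall>i<r. (\<lambda>i. if i < r then of_int (c i) / of_nat t else (0::rat)) i = of_int (c' i) / of_nat t'))"
    using t0 t unfolding lin_def by auto
next
  fix q :: "nat \<Rightarrow> rat"
  assume H: "(\<forall>i\<ge>r. q i = 0) \<and> (\<exists>t' c'. 0 < t' \<and> x [^] t' = (\<Otimes>i\<in>{..<r}. b i [^] c' i) \<and>
       (\<forall>i<r. q i = of_int (c' i) / of_nat t'))"
  then obtain t' c' where t'0: "t' > 0" and t': "x [^] (t'::nat) = lin b r c'"
    and q: "\<forall>i<r. q i = of_int (c' i) / of_nat t'" unfolding lin_def by blast
  show "q = (\<lambda>i. if i < r then of_int (c i) / of_nat t else 0)"
  proof
    fix i show "q i = (if i < r then of_int (c i) / of_nat t else 0)"
    proof (cases "i < r")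
      case True
      have "c i * int t' = c' i * int t" by (rule pow_eq_coef[OF B x t t' True])
      then have "(of_int (c i) :: rat) * of_nat t' = of_int (c' i) * of_nat t"
        by (metis of_int_mult of_int_of_nat_eq)
      moreover have qi: "q i = of_int (c' i) / of_nat t'" using q True by simp
      ultimately have "of_nat t' * (of_nat t * q i) = of_nat t' * (of_int (c i) :: rat)"
        using t'0 by (simp add: field_simps)
      then have "of_nat t * q i = (of_int (c i) :: rat)" using t'0 by simp
      then show ?thesis using True t0 by (simp add: field_simps)
    next
      case False then show ?thesis using H by simp
    qed
  qed
qed

lemma coords_exists:
  assumes B: "qbasis G b r" and x: "x \<in> carrier G"
  obtains t c where "t > 0" "x [^] (t::nat) = lin b r c"
    "qcoords G b r x = (\<lambda>i. if i < r then of_int (c i) / of_nat t else 0)"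
  using qspan_ex[OF B x] coords_eq[OF B x] by blast

lemma coords_zero: "qbasis G b r \<Longrightarrow> x \<in> carrier G \<Longrightarrow> \<not> i < r \<Longrightarrow> qcoords G b r x i = 0"
  by (metis coords_exists)

lemma coords_mult:
  assumes B: "qbasis G b r" and x: "x \<in> carrier G" and y: "y \<in> carrier G"
  shows "qcoords G b r (x \<otimes> y) i = qcoords G b r x i + qcoords G b r y i"
proof -
  have carr: "\<And>i. i < r \<Longrightarrow> b i \<in> carrier G" using B qbasis_carr by blast
  obtain t c where t0: "t > 0" and t: "x [^] (t::nat) = lin b r c"
    and ct: "qcoords G b r x = (\<lambda>i. if i < r then of_int (c i) / of_nat t else 0)"
    using coords_exists[OF B x] by blast
  obtain s d where s0: "s > 0" and s: "y [^] (s::nat) = lin b r d"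
    and ds: "qcoords G b r y = (\<lambda>i. if i < r then of_int (d i) / of_nat s else 0)"
    using coords_exists[OF B y] by blast
  have "(x \<otimes> y) [^] (t * s) = x [^] (t * s) \<otimes> y [^] (t * s)"
    using x y by (simp add: nat_pow_distrib)
  also have "x [^] (t * s) = lin b r (\<lambda>i. int s * c i)"
    using nat_pow_pow[OF x, of t s, symmetric] t lin_pow_nat[OF carr] by simp
  also have "y [^] (t * s) = lin b r (\<lambda>i. int t * d i)"
    using nat_pow_pow[OF y, of s t, symmetric] s lin_pow_nat[OF carr] by (simp add: mult.commute)
  also have "lin b r (\<lambda>i. int s * c i) \<otimes> lin b r (\<lambda>i. int t * d i)
      = lin b r (\<lambda>i. int s * c i + int t * d i)"
    by (rule lin_add[OF carr, symmetric])
  finally have "qcoords G b r (x \<otimes> y) = (\<lambda>i. if i < r then of_int (int s * c i + int t * d i) / of_nat (t * s) else 0)"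
    using coords_eq[OF B _ _] x y t0 s0 by simp
  then show ?thesis using ct ds t0 s0 by (simp add: field_simps)
qed

lemma coords_pow_int:
  assumes B: "qbasis G b r" and x: "x \<in> carrier G"
  shows "qcoords G b r (x [^] (z::int)) i = of_int z * qcoords G b r x i"
proof -
  have carr: "\<And>i. i < r \<Longrightarrow> b i \<in> carrier G" using B qbasis_carr by blast
  obtain t c where t0: "t > 0" and t: "x [^] (t::nat) = lin b r c"
    and ct: "qcoords G b r x = (\<lambda>i. if i < r then of_int (c i) / of_nat t else 0)"
    using coords_exists[OF B x] by blast
  have "(x [^] z) [^] t = (x [^] z) [^] (int t)" by (simp add: int_pow_int)
  also have "\<dots> = x [^] (z * int t)" using x by (simp add: int_pow_pow)
  also have "\<dots> = (x [^] (int t)) [^] z" using x by (simp add: int_pow_pow mult.commute)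
  also have "\<dots> = lin b r (\<lambda>i. z * c i)" using t lin_pow_int[OF carr] by (simp add: int_pow_int)
  finally have "qcoords G b r (x [^] z) = (\<lambda>i. if i < r then of_int (z * c i) / of_nat t else 0)"
    using coords_eq[OF B _ t0] x by simp
  then show ?thesis using ct by simp
qed

lemma coords_pow_nat:
  assumes B: "qbasis G b r" and x: "x \<in> carrier G"
  shows "qcoords G b r (x [^] (n::nat)) i = of_nat n * qcoords G b r x i"
  using coords_pow_int[OF B x, of "int n"] by (simp add: int_pow_int)

lemma coords_finprod:
  fixes y :: "nat \<Rightarrow> 'a" and s :: nat
  assumes B: "qbasis G b r" and y: "\<And>j. j < s \<Longrightarrow> y j \<in> carrier G"
  shows "qcoords G b r (finprod G (\<lambda>j. y j [^] e j) {..<s}) i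
     = (\<Sum>j<s. of_int (e j) * qcoords G b r (y j) i)"
  using y
proof (induction s)
  case 0
  have "\<one> [^] (1::nat) = lin b r (\<lambda>i. 0)" unfolding lin_def by simp
  from coords_eq[OF B one_closed zero_less_one this]
  have "qcoords G b r \<one> = (\<lambda>i. if i < r then of_int 0 / of_nat 1 else 0)" .
  then show ?case by simp
next
  case (Suc s)
  have "finprod G (\<lambda>j. y j [^] e j) {..<Suc s} = y s [^] e s \<otimes> finprod G (\<lambda>j. y j [^] e j) {..<s}"
    using Suc.prems by (subst finprod_lessThan_Suc) auto
  then show ?case using Suc
    by (simp add: coords_mult[OF B] coords_pow_int[OF B] finprod_closed Pi_def)
qed


lemma coords_basis:
  assumes B: "qbasis G b r" and j: "j < r"
  shows "qcoords G b r (b j) = (\<lambda>i. if i = j then 1 else 0)"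
proof -
  have carr: "\<And>i. i < r \<Longrightarrow> b i \<in> carrier G" using B qbasis_carr by blast
  have "lin b r (\<lambda>i. if i = j then 1 else 0) = finprod G (\<lambda>i. if j = i then b i else \<one>) {..<r}"
    unfolding lin_def by (intro finprod_cong) (auto simp: carr simp_implies_def)
  also have "\<dots> = b j" using j carr by (intro finprod_singleton) auto
  finally have "b j [^] (1::nat) = lin b r (\<lambda>i. if i = j then 1 else 0)" using carr j by simp
  from coords_eq[OF B carr[OF j] zero_less_one this] show ?thesis using j by auto
qed

lemma hom_lin:
  assumes h: "h \<in> hom G G" and carr: "\<And>i. i < r \<Longrightarrow> b i \<in> carrier G"
  shows "h (lin b r c) = lin (\<lambda>i. h (b i)) r c"
  using carr
proof (induction r)
  case 0
  have gh: "group_hom G G h" by (simp add: group_hom_def group_hom_axioms_def h is_group)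
  show ?case unfolding lin_def using group_hom.hom_one[OF gh] by simp
next
  case (Suc r)
  have gh: "group_hom G G h" by (simp add: group_hom_def group_hom_axioms_def h is_group)
  have hc: "\<And>i. i < Suc r \<Longrightarrow> h (b i) \<in> carrier G" using Suc.prems h by (auto simp: hom_def Pi_def)
  have "lin b (Suc r) c = b r [^] c r \<otimes> lin b r c"
    unfolding lin_def using Suc.prems by (subst finprod_lessThan_Suc) auto
  then have "h (lin b (Suc r) c) = h (b r [^] c r) \<otimes> h (lin b r c)"
    using Suc.prems lin_closed[of r b c] by (simp add: group_hom.hom_mult[OF gh])
  also have "\<dots> = h (b r) [^] c r \<otimes> lin (\<lambda>i. h (b i)) r c"
    using Suc by (simp add: group_hom.hom_int_pow[OF gh])
  also have "\<dots> = lin (\<lambda>i. h (b i)) (Suc r) c"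
    unfolding lin_def using hc by (subst finprod_lessThan_Suc) auto
  finally show ?case .
qed

lemma coords_hom:
  assumes B: "qbasis G b r" and B': "qbasis G b' r'" and h: "h \<in> hom G G" and x: "x \<in> carrier G"
  shows "qcoords G b r (h x) i = (\<Sum>j<r'. qcoords G b' r' x j * qcoords G b r (h (b' j)) i)"
proof -
  have carr': "\<And>i. i < r' \<Longrightarrow> b' i \<in> carrier G" using B' qbasis_carr by blast
  have gh: "group_hom G G h" by (simp add: group_hom_def group_hom_axioms_def h is_group)
  have hc: "\<And>y. y \<in> carrier G \<Longrightarrow> h y \<in> carrier G" using h by (auto simp: hom_def Pi_def)
  obtain t c where t0: "t > 0" and t: "x [^] (t::nat) = lin b' r' c"
    and ct: "qcoords G b' r' x = (\<lambda>i. if i < r' then of_int (c i) / of_nat t else 0)"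
    using coords_exists[OF B' x] by blast
  have "(h x) [^] t = h (x [^] t)" using x by (simp add: group_hom.hom_nat_pow[OF gh])
  also have "\<dots> = lin (\<lambda>i. h (b' i)) r' c" using t hom_lin[OF h carr'] by simp
  finally have "of_nat t * qcoords G b r (h x) i = qcoords G b r (lin (\<lambda>i. h (b' i)) r' c) i"
    using coords_pow_nat[OF B hc[OF x], of t i] by simp
  also have "\<dots> = (\<Sum>j<r'. of_int (c j) * qcoords G b r (h (b' j)) i)"
    unfolding lin_def using hc carr' by (intro coords_finprod[OF B]) auto
  finally have "qcoords G b r (h x) i = (\<Sum>j<r'. of_int (c j) * qcoords G b r (h (b' j)) i) / of_nat t"
    using t0 by (simp add: field_simps)
  also have "\<dots> = (\<Sum>j<r'. qcoords G b' r' x j * qcoords G b r (h (b' j)) i)"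
    unfolding sum_divide_distrib using ct by (intro sum.cong) auto
  finally show ?thesis .
qed


lemma id_hom: "(\<lambda>x. x) \<in> hom G G"
  by (simp add: hom_def)

lemma basis_PQ:
  assumes B: "qbasis G b r" and B': "qbasis G b' r'" and k: "k < r" and i: "i < r"
  shows "(\<Sum>j<r'. qcoords G b' r' (b k) j * qcoords G b r (b' j) i) = (if i = k then 1 else 0)"
  using coords_hom[OF B B' id_hom qbasis_carr[OF B k], of i] coords_basis[OF B k] by simp

lemma basis_rank_eq:
  assumes B: "qbasis G b r" and B': "qbasis G b' r'"
  shows "r = r'"
proof -
  have "of_nat r = (\<Sum>k<r. (1::rat))" by simp
  also have "\<dots> = (\<Sum>k<r. \<Sum>j<r'. qcoords G b' r' (b k) j * qcoords G b r (b' j) k)"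
    using basis_PQ[OF B B'] by simp
  also have "\<dots> = (\<Sum>j<r'. \<Sum>k<r. qcoords G b r (b' j) k * qcoords G b' r' (b k) j)"
    by (subst sum.swap) (simp add: mult.commute)
  also have "\<dots> = (\<Sum>j<r'. (1::rat))"
    using basis_PQ[OF B' B] by simp
  also have "\<dots> = of_nat r'" by simp
  finally show ?thesis by simp
qed

lemma trace_inv:
  assumes B: "qbasis G b r" and B': "qbasis G b' r'" and h: "h \<in> hom G G"
  shows "(\<Sum>j<r'. qcoords G b' r' (h (b' j)) j) = (\<Sum>m<r. qcoords G b r (h (b m)) m)"
proof -
  have hc: "\<And>y. y \<in> carrier G \<Longrightarrow> h y \<in> carrier G" using h by (auto simp: hom_def Pi_def)
  have c': "\<And>j. j < r' \<Longrightarrow> b' j \<in> carrier G" using B' qbasis_carr by blast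
  have "(\<Sum>j<r'. qcoords G b' r' (h (b' j)) j)
     = (\<Sum>j<r'. \<Sum>m<r. qcoords G b r (h (b' j)) m * qcoords G b' r' (b m) j)"
    using coords_hom[OF B' B id_hom hc[OF c']] by simp
  also have "\<dots> = (\<Sum>j<r'. \<Sum>m<r. (\<Sum>k<r. qcoords G b r (b' j) k * qcoords G b r (h (b k)) m) * qcoords G b' r' (b m) j)"
    using coords_hom[OF B B h c'] by simp
  also have "\<dots> = (\<Sum>j<r'. \<Sum>m<r. \<Sum>k<r. qcoords G b r (h (b k)) m * (qcoords G b' r' (b m) j * qcoords G b r (b' j) k))"
    by (simp add: sum_distrib_right sum_distrib_left ac_simps)
  also have "\<dots> = (\<Sum>m<r. \<Sum>j<r'. \<Sum>k<r. qcoords G b r (h (b k)) m * (qcoords G b' r' (b m) j * qcoords G b r (b' j) k))"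
    by (rule sum.swap)
  also have "\<dots> = (\<Sum>m<r. \<Sum>k<r. \<Sum>j<r'. qcoords G b r (h (b k)) m * (qcoords G b' r' (b m) j * qcoords G b r (b' j) k))"
    by (rule sum.cong[OF refl], rule sum.swap)
  also have "\<dots> = (\<Sum>m<r. \<Sum>k<r. qcoords G b r (h (b k)) m * (\<Sum>j<r'. qcoords G b' r' (b m) j * qcoords G b r (b' j) k))"
    by (simp add: sum_distrib_left)
  also have "\<dots> = (\<Sum>m<r. \<Sum>k<r. qcoords G b r (h (b k)) m * (if k = m then 1 else 0))"
    using basis_PQ[OF B B'] by simp
  also have "\<dots> = (\<Sum>m<r. qcoords G b r (h (b m)) m)"
    by (simp add: if_distrib cong: if_cong)
  finally show ?thesis .
qed

lemma diag_comp:
  assumes B: "qbasis G b r" and h: "h \<in> hom G G" and g: "g \<in> hom G G"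
    and dg: "\<And>i j. i < r \<Longrightarrow> j < r \<Longrightarrow> qcoords G b r (g (b j)) i = (if i = j then d j else 0)"
    and dh: "\<And>i j. i < r \<Longrightarrow> j < r \<Longrightarrow> qcoords G b r (h (b j)) i = (if i = j then e j else 0)"
    and i: "i < r" and j: "j < r"
  shows "qcoords G b r (h (g (b j))) i = (if i = j then d j * e j else 0)"
proof -
  have gc: "g (b j) \<in> carrier G" using g qbasis_carr[OF B j] by (auto simp: hom_def Pi_def)
  have "qcoords G b r (h (g (b j))) i = (\<Sum>k<r. qcoords G b r (g (b j)) k * qcoords G b r (h (b k)) i)"
    by (rule coords_hom[OF B B h gc])
  also have "\<dots> = (\<Sum>k<r. (if k = j then d j * qcoords G b r (h (b k)) i else 0))"
    using dg j by (intro sum.cong) auto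
  also have "\<dots> = d j * qcoords G b r (h (b j)) i" using j by simp
  finally show ?thesis using dh[OF i j] by simp
qed

lemma diag_eigen:
  assumes B: "qbasis G b r" and B': "qbasis G b' r'" and h: "h \<in> hom G G"
    and dh: "\<And>i j. i < r \<Longrightarrow> j < r \<Longrightarrow> qcoords G b r (h (b j)) i = (if i = j then d j else 0)"
    and j0: "j0 < r" and i: "i < r'"
  shows "(\<Sum>j<r'. qcoords G b' r' (h (b' j)) i * qcoords G b' r' (b j0) j) = d j0 * qcoords G b' r' (b j0) i"
proof -
  have hc: "\<And>y. y \<in> carrier G \<Longrightarrow> h y \<in> carrier G" using h by (auto simp: hom_def Pi_def)
  have "(\<Sum>j<r'. qcoords G b' r' (h (b' j)) i * qcoords G b' r' (b j0) j) = qcoords G b' r' (h (b j0)) i"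
    using coords_hom[OF B' B' h qbasis_carr[OF B j0], of i] by (simp add: mult.commute)
  also have "\<dots> = (\<Sum>m<r. qcoords G b r (h (b j0)) m * qcoords G b' r' (b m) i)"
    using coords_hom[OF B' B id_hom hc[OF qbasis_carr[OF B j0]], of i] by simp
  also have "\<dots> = (\<Sum>m<r. if m = j0 then d j0 * qcoords G b' r' (b m) i else 0)"
    using dh j0 by (intro sum.cong) auto
  also have "\<dots> = d j0 * qcoords G b' r' (b j0) i" using j0 by simp
  finally show ?thesis .
qed

lemma eigvec_nonzero:
  assumes B: "qbasis G b r" and B': "qbasis G b' r'" and j0: "j0 < r"
  shows "\<exists>i<r'. qcoords G b' r' (b j0) i \<noteq> 0"
proof (rule ccontr)
  assume "\<not> ?thesis"
  then have "(\<Sum>j<r'. qcoords G b' r' (b j0) j * qcoords G b r (b' j) j0) = 0" by simp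
  with basis_PQ[OF B B' j0 j0] show False by simp
qed

end



definition EE :: "rat fps \<Rightarrow> rat fps" where "EE g = fps_exp 1 oo g"

lemma EE_0: "fps_nth (EE g) 0 = 1" unfolding EE_def by simp

lemma EE_deriv: "fps_nth g 0 = 0 \<Longrightarrow> fps_deriv (EE g) = EE g * fps_deriv g"
  unfolding EE_def by (simp add: fps_compose_deriv)

lemma EE_unique:
  assumes g0: "fps_nth g 0 = 0" and Z0: "fps_nth Z 0 = 1" and ZD: "fps_deriv Z = Z * fps_deriv g"
  shows "EE g = Z"
proof -
  define H where "H = EE g * inverse Z"
  have ZI: "Z * inverse Z = 1" using Z0 by (simp add: inverse_mult_eq_1')
  have "fps_deriv H = EE g * fps_deriv g * inverse Z + EE g * (- fps_deriv Z * (inverse Z)\<^sup>2)"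
    unfolding H_def using Z0 by (simp add: EE_deriv[OF g0] fps_inverse_deriv)
  also have "\<dots> = EE g * fps_deriv g * inverse Z - EE g * fps_deriv g * (Z * inverse Z) * inverse Z"
    unfolding ZD by (simp add: power2_eq_square algebra_simps)
  also have "\<dots> = 0" using ZI by simp
  finally have "H = fps_const (fps_nth H 0)" by simp
  moreover have "fps_nth H 0 = 1" unfolding H_def using Z0 EE_0 by simp
  ultimately have "H = 1" by simp
  then have "EE g * (inverse Z * Z) = Z" unfolding H_def by (simp add: mult.assoc)
  then show ?thesis using ZI by (simp add: mult.commute)
qed

lemma EE_zero: "EE 0 = 1"
  by (rule EE_unique) auto

lemma EE_add: "fps_nth u 0 = 0 \<Longrightarrow> fps_nth v 0 = 0 \<Longrightarrow> EE (u + v) = EE u * EE v"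
  by (rule EE_unique) (auto simp: EE_0 EE_deriv algebra_simps)

lemma EE_minus: assumes "fps_nth u 0 = 0" shows "EE (- u) = inverse (EE u)"
proof -
  have "EE u * EE (- u) = 1" using EE_add[of u "-u"] assms EE_zero by simp
  then show ?thesis using EE_0[of u]
    by (metis fps_inverse_unique mult.commute)
qed

lemma EE_smult: "fps_nth u 0 = 0 \<Longrightarrow> EE (of_nat k * u) = EE u ^ k"
proof (induction k)
  case 0 then show ?case by (simp add: EE_zero)
next
  case (Suc k)
  have "EE (of_nat (Suc k) * u) = EE (u + of_nat k * u)" by (simp add: algebra_simps)
  also have "\<dots> = EE u * EE (of_nat k * u)" using Suc by (intro EE_add) auto
  finally show ?case using Suc by simp
qed

definition l1 :: "rat fps" where "l1 = Abs_fps (\<lambda>m. if m = 0 then 0 else 1 / of_nat m)"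
definition l2 :: "rat fps" where "l2 = Abs_fps (\<lambda>m. if m = 0 then 0 else (-1)^(m+1) / of_nat m)"

lemma l1_0: "fps_nth l1 0 = 0" by (simp add: l1_def)
lemma l2_0: "fps_nth l2 0 = 0" by (simp add: l2_def)

lemma l1_deriv: "fps_deriv l1 = Abs_fps (\<lambda>n. 1)"
  by (rule fps_ext) (simp add: l1_def del: of_nat_Suc)

lemma l2_deriv: "fps_deriv l2 = Abs_fps (\<lambda>n. (-1)^n)"
  by (rule fps_ext) (simp add: l2_def del: of_nat_Suc)

lemma EE_l1: "EE l1 = inverse (1 - fps_X)"
proof -
  have G: "(1 - fps_X) * Abs_fps (\<lambda>n. 1::rat) = 1"
    using fps_inverse_gp'[where 'a=rat] inverse_mult_eq_1[of "Abs_fps (\<lambda>n. 1::rat)"]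
    by simp
  have "EE (- l1) = 1 - fps_X"
    proof (rule EE_unique)
    show "fps_deriv (1 - fps_X) = (1 - fps_X) * fps_deriv (- l1)"
      using G by (simp add: l1_deriv)
  qed (auto simp: l1_0)
  then have "inverse (EE l1) = 1 - fps_X" using EE_minus[of l1] by (simp add: l1_0)
  then show ?thesis by (metis fps_inverse_idempotent EE_0 one_neq_zero)
qed

lemma EE_l2: "EE l2 = 1 + fps_X"
proof -
  have G: "(1 + fps_X) * Abs_fps (\<lambda>n. (-1::rat)^n) = 1"
  proof (rule fps_ext)
    fix n show "fps_nth ((1 + fps_X) * Abs_fps (\<lambda>n. (-1::rat)^n)) n = fps_nth 1 n"
      by (cases n) (auto simp: algebra_simps fps_X_mult_nth)
  qed
  show ?thesis
    by (rule EE_unique) (auto simp: l2_0 l2_deriv G)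
qed


lemma EE_nth1: "fps_nth g 0 = 0 \<Longrightarrow> fps_nth (EE g) 1 = fps_nth g 1"
proof -
  assume g0: "fps_nth g 0 = 0"
  have "fps_nth (fps_deriv (EE g)) 0 = fps_nth (EE g * fps_deriv g) 0" by (simp add: EE_deriv[OF g0])
  then show ?thesis by (simp add: EE_0)
qed

definition gen :: "(nat \<Rightarrow> rat) \<Rightarrow> rat fps" where
  "gen L = Abs_fps (\<lambda>m. if m = 0 then 0 else L m / of_nat m)"

lemma gen_0: "fps_nth (gen L) 0 = 0" by (simp add: gen_def)

lemma gen_A1:
  assumes "\<forall>m>0. L m = of_nat K"
  shows "EE (gen L) = inverse (1 - fps_X) ^ K"
proof -
  have "gen L = of_nat K * l1"
    by (rule fps_ext) (use assms in \<open>simp add: gen_def l1_def fps_of_nat[symmetric]\<close>)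
  then show ?thesis by (simp add: EE_smult l1_0 EE_l1)
qed

lemma gen_A2:
  assumes "\<forall>m>0. L m = (if odd m then 2 * of_nat K else 0)"
  shows "EE (gen L) = (inverse (1 - fps_X) * (1 + fps_X)) ^ K"
proof -
  have "gen L = of_nat K * (l1 + l2)"
    by (rule fps_ext) (use assms in \<open>auto simp: gen_def l1_def l2_def fps_of_nat[symmetric] field_simps\<close>)
  then show ?thesis by (simp add: EE_smult l1_0 l2_0 EE_add EE_l1 EE_l2)
qed

lemma gen_B2:
  assumes "\<forall>m>0. L m = (if even m then 2 * of_nat K else 0)"
  shows "EE (gen L) = (inverse (1 - fps_X) * inverse (1 + fps_X)) ^ K"
proof -
  have "gen L = of_nat K * (l1 + - l2)"
    by (rule fps_ext) (use assms in \<open>auto simp: gen_def l1_def l2_def fps_of_nat[symmetric] field_simps\<close>)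
  moreover have "EE (l1 + - l2) = inverse (1 - fps_X) * inverse (1 + fps_X)"
    by (subst EE_add) (simp_all add: l1_0 l2_0 EE_l1 EE_l2 EE_minus)
  ultimately show ?thesis by (simp add: EE_smult l1_0 l2_0 del: add_uminus_conv_diff)
qed

lemma gen_B1:
  assumes "\<forall>m>0. L m = 0"
  shows "EE (gen L) = 1"
proof -
  have "gen L = 0"
    by (rule fps_ext) (use assms in \<open>simp add: gen_def\<close>)
  then show ?thesis by (simp add: EE_zero)
qed

lemma gen_nth1: "fps_nth (EE (gen L)) 1 = L 1"
proof -
  have "fps_nth (EE (gen L)) 1 = fps_nth (gen L) 1" by (rule EE_nth1[OF gen_0])
  then show ?thesis by (simp add: gen_def)
qed


definition Qp :: "rat fps \<Rightarrow> bool" where "Qp p \<longleftrightarrow> fps_nth p 0 = 1 \<and> fps_nth p 1 = 0"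

lemma Qp_mult: "Qp p \<Longrightarrow> Qp q \<Longrightarrow> Qp (p * q)"
  unfolding Qp_def by (simp add: fps_mult_nth_1)

lemma Qp_one: "Qp 1" unfolding Qp_def by simp

lemma Qp_power: "Qp p \<Longrightarrow> Qp (p ^ n)"
  by (induction n) (auto simp: Qp_one Qp_mult)

lemma Qp_inverse: assumes "Qp p" shows "Qp (inverse p)"
proof -
  have p0: "fps_nth p 0 = 1" and p1: "fps_nth p 1 = 0" using assms unfolding Qp_def by auto
  have "p * inverse p = 1" using p0 by (simp add: inverse_mult_eq_1')
  then have "fps_nth (p * inverse p) 1 = 0" by simp
  then have "fps_nth (inverse p) 1 = 0" using p0 p1 by (simp add: fps_mult_nth_1)
  then show ?thesis unfolding Qp_def using p0 by simp
qed

lemma Qp_powi: "Qp p \<Longrightarrow> Qp (p powi m)"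
  unfolding power_int_def by (auto intro: Qp_power Qp_inverse)

lemma Qp_factor: "r \<ge> 2 \<Longrightarrow> Qp (1 + fps_const (of_int \<Delta>) * fps_X ^ r)"
  unfolding Qp_def by simp

lemma Qp_prod:
  "(\<forall>(\<Delta>, r, m)\<in>set rs. r \<ge> 2) \<Longrightarrow>
   Qp (\<Prod>(\<Delta>, r, m)\<leftarrow>rs. (1 + fps_const (of_int \<Delta>) * fps_X ^ r) powi m)"
proof (induction rs)
  case Nil then show ?case by (simp add: Qp_one)
next
  case (Cons x rs)
  obtain \<Delta> r m where x: "x = (\<Delta>, r, m)" by (cases x) auto
  show ?case using Cons x by (auto intro!: Qp_mult Qp_powi Qp_factor)
qed

lemma MP_one:
  assumes z1: "fps_nth z 1 \<noteq> 0" and R: "zeta_repr z rs0" and S: "set (map (\<lambda>(\<Delta>, r, m). r) rs0) = {1}"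
  shows "(if z = 1 then {} else \<Inter> {set (map (\<lambda>(\<Delta>, r, m). r) rs) | rs. zeta_repr z rs}) = {1}"
proof -
  have "z \<noteq> 1" using z1 by auto
  moreover have "1 \<in> set (map (\<lambda>(\<Delta>, r, m). r) rs)" if "zeta_repr z rs" for rs
  proof (rule ccontr)
    assume n1: "1 \<notin> set (map (\<lambda>(\<Delta>, r, m). r) rs)"
    have "\<forall>(\<Delta>, r, m)\<in>set rs. r \<ge> 2"
    proof (clarify)
      fix \<Delta> r m assume "(\<Delta>, r, m) \<in> set rs"
      then have "r > 0" "r \<noteq> 1" using that n1 unfolding zeta_repr_def by (auto, force)
      then show "r \<ge> 2" by simp
    qed
    from Qp_prod[OF this] that z1 show False unfolding zeta_repr_def Qp_def by simp
  qed
  ultimately have a: "{1} \<subseteq> \<Inter> {set (map (\<lambda>(\<Delta>, r, m). r) rs) | rs. zeta_repr z rs}" by blast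
  have b: "\<Inter> {set (map (\<lambda>(\<Delta>, r, m). r) rs) | rs. zeta_repr z rs} \<subseteq> {1}"
    using R S by blast
  show ?thesis using a b \<open>z \<noteq> 1\<close> by auto
qed

lemma MP_empty:
  assumes R1: "zeta_repr z rs1" and S1: "set (map (\<lambda>(\<Delta>, r, m). r) rs1) = {1}"
    and R2: "zeta_repr z rs2" and S2: "set (map (\<lambda>(\<Delta>, r, m). r) rs2) = {2}"
  shows "(if z = 1 then {} else \<Inter> {set (map (\<lambda>(\<Delta>, r, m). r) rs) | rs. zeta_repr z rs}) = {}"
proof -
  have "\<Inter> {set (map (\<lambda>(\<Delta>, r, m). r) rs) | rs. zeta_repr z rs} \<subseteq> {1} \<inter> {2}"
    using R1 S1 R2 S2 by blast
  then show ?thesis by auto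
qed

lemma repr_A1:
  assumes "K > 0"
  shows "zeta_repr (inverse (1 - fps_X) ^ K) [(-1, 1, - int K)]"
  using assms unfolding zeta_repr_def by (simp add: power_int_def fps_const_neg[symmetric])

lemma repr_A2:
  assumes "K > 0"
  shows "zeta_repr ((inverse (1 - fps_X) * (1 + fps_X)) ^ K) [(-1, 1, - int K), (1, 1, int K)]"
  using assms unfolding zeta_repr_def by (simp add: power_int_def fps_const_neg[symmetric] power_mult_distrib)

lemma repr_B2a:
  assumes "K > 0"
  shows "zeta_repr ((inverse (1 - fps_X) * inverse (1 + fps_X)) ^ K) [(-1, 1, - int K), (1, 1, - int K)]"
  using assms unfolding zeta_repr_def by (simp add: power_int_def fps_const_neg[symmetric] power_mult_distrib)

lemma repr_B2b:
  assumes "K > 0"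
  shows "zeta_repr ((inverse (1 - fps_X) * inverse (1 + fps_X)) ^ K) [(-1, 2, - int K)]"
proof -
  have "(1 - fps_X) * (1 + fps_X) = (1 - fps_X ^ 2 :: rat fps)" by (simp add: algebra_simps power2_eq_square)
  then have "inverse (1 - fps_X) * inverse (1 + fps_X) = inverse (1 - fps_X ^ 2 :: rat fps)"
    by (metis fps_inverse_mult)
  then show ?thesis
    using assms unfolding zeta_repr_def by (simp add: power_int_def fps_const_neg[symmetric])
qed




lemma cont_f:
  assumes "C1_map_on S f"
  shows "continuous_map (top_of_set S) (top_of_set S) f"
proof -
  obtain U g g' where U: "open U" "S \<subseteq> U" and D: "\<forall>x\<in>U. (g has_derivative blinfun_apply (g' x)) (at x)"
    and eq: "\<forall>x\<in>S. g x = f x" and im: "f ` S \<subseteq> S"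
    using assms unfolding C1_map_on_def by blast
  have "continuous_on U g"
    using D by (intro has_derivative_continuous_on) (auto intro: has_derivative_at_withinI)
  then have "continuous_on S g" using U continuous_on_subset by blast
  then have "continuous_on S f" using eq continuous_on_eq by blast
  then show ?thesis using im by auto
qed

lemma cont_iter:
  assumes "continuous_map X X f"
  shows "continuous_map X X (f ^^ m)"
proof (induction m)
  case 0 then show ?case by (simp add: continuous_map_id[unfolded id_def])
next
  case (Suc m)
  have "continuous_map X X (f \<circ> f ^^ m)" by (rule continuous_map_compose[OF Suc assms])
  then show ?case by (simp add: comp_def)
qed

lemma fstar_diag:
  assumes cont: "continuous_map X X f"
    and B: "qbasis (homology_group k X) b r"
    and dg: "\<And>i j. i < r \<Longrightarrow> j < r \<Longrightarrow> qcoords (homology_group k X) b r (fstar k X f (b j)) i = (if i = j then d j else 0)"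
    and i: "i < r" and j: "j < r"
  shows "qcoords (homology_group k X) b r (fstar k X (f ^^ m) (b j)) i = (if i = j then d j ^ m else 0)"
  using i j
proof (induction m arbitrary: i j)
  case 0
  have e0: "fstar k X (f ^^ 0) (b j) = b j"
    unfolding funpow_0 using hom_induced_id[OF comm_group.qbasis_carr[OF abelian_homology_group B 0(2)]]
    unfolding id_def .
  show ?case unfolding e0 using comm_group.coords_basis[OF abelian_homology_group B 0(2)] by simp
next
  case (Suc m)
  have "fstar k X (f ^^ Suc m) = fstar k X (f \<circ> f ^^ m)" by simp
  also have "\<dots> = fstar k X f \<circ> fstar k X (f ^^ m)"
    by (rule hom_induced_compose) (auto intro: cont cont_iter)
  finally have e: "fstar k X (f ^^ Suc m) (b j) = fstar k X f (fstar k X (f ^^ m) (b j))" by simp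
  show ?case unfolding e
    using comm_group.diag_comp[OF abelian_homology_group B hom_induced_hom hom_induced_hom, where d="\<lambda>j. d j ^ m" and e=d]
      Suc.IH dg Suc.prems by (simp add: mult.commute)
qed

lemma qbas_basis:
  assumes "qbasis G b r"
  shows "qbasis G (qbas G) (qrank G)"
proof -
  have ex: "\<exists>r b. qbasis G b r" using assms by blast
  have "\<exists>b. qbasis G b (qrank G)" unfolding qrank_def by (rule someI_ex[OF ex])
  then show ?thesis unfolding qbas_def by (rule someI_ex)
qed

lemma qrank_eq:
  assumes "comm_group G" "qbasis G b r"
  shows "qrank G = r"
  using comm_group.basis_rank_eq[OF assms(1) assms(2) qbas_basis[OF assms(2)]] by simp

lemma qtrace_eq:
  assumes "comm_group G" "qbasis G b r" "h \<in> hom G G"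
  shows "qtrace G h = (\<Sum>j<r. qcoords G b r (h (b j)) j)"
  unfolding qtrace_def qmatrix_def
  using comm_group.trace_inv[OF assms(1) assms(2) qbas_basis[OF assms(2)] assms(3)] by simp

definition Sk :: "nat \<Rightarrow> (nat \<Rightarrow> nat) \<Rightarrow> nat \<Rightarrow> nat set set" where
  "Sk l n k = {S. S \<subseteq> {..<l} \<and> (\<Sum>i\<in>S. n i) = k}"

lemma Sk_finite: "finite (Sk l n k)"
  unfolding Sk_def by (rule finite_subset[of _ "Pow {..<l}"]) auto

lemma per_k:
  assumes cont: "continuous_map X X f" and BE: "basic_eigenvalues X f l n a"
  shows "qrank (homology_group (int k) X) = card (Sk l n k) \<and>
    (\<forall>m. qtrace (homology_group (int k) X) (fstar (int k) X (f ^^ m))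
         = (\<Sum>S\<in>Sk l n k. (of_int (\<Prod>i\<in>S. a i)) ^ m))"
proof -
  obtain b r d where B: "qbasis (homology_group (int k) X) b r"
    and dg: "\<forall>i<r. \<forall>j<r. qmatrix (homology_group (int k) X) b r (fstar (int k) X f) i j = (if i = j then d j else 0)"
    and ms: "mset (map d [0..<r]) = image_mset (\<lambda>S. of_int (\<Prod>i\<in>S. a i)) (mset_set (Sk l n k))"
    using BE unfolding basic_eigenvalues_def Sk_def by blast
  have r: "r = card (Sk l n k)"
    using arg_cong[OF ms, of size] by simp
  have "qtrace (homology_group (int k) X) (fstar (int k) X (f ^^ m)) = (\<Sum>S\<in>Sk l n k. (of_int (\<Prod>i\<in>S. a i)) ^ m)" for m
  proof -
    have "qtrace (homology_group (int k) X) (fstar (int k) X (f ^^ m)) = (\<Sum>j<r. d j ^ m)"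
      using qtrace_eq[OF abelian_homology_group B hom_induced_hom]
        fstar_diag[OF cont B, of d] dg unfolding qmatrix_def by simp
    also have "\<dots> = sum_list (map (\<lambda>x. x ^ m) (map d [0..<r]))"
      by (simp add: sum_set_upt_conv_sum_list_nat[symmetric] atLeast0LessThan)
    also have "\<dots> = sum_mset (image_mset (\<lambda>x. x ^ m) (mset (map d [0..<r])))"
      by (metis mset_map sum_mset_sum_list)
    also have "\<dots> = (\<Sum>S\<in>Sk l n k. (of_int (\<Prod>i\<in>S. a i)) ^ m)"
      unfolding ms by (simp add: sum_unfold_sum_mset multiset.map_comp comp_def)
    finally show ?thesis .
  qed
  then show ?thesis using qrank_eq[OF abelian_homology_group B] r by simp
qed


lemma eig_unit:
  assumes cont: "continuous_map X X f" and BE: "basic_eigenvalues X f l n a"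
    and QU: "quasi_unipotent X f" and il: "i < l"
  shows "a i = 1 \<or> a i = -1"
proof -
  define G where "G = homology_group (int (n i)) X"
  obtain b r d where B: "qbasis G b r"
    and dg: "\<forall>p<r. \<forall>q<r. qmatrix G b r (fstar (int (n i)) X f) p q = (if p = q then d q else 0)"
    and ms: "mset (map d [0..<r]) = image_mset (\<lambda>S. of_int (\<Prod>i\<in>S. a i)) (mset_set (Sk l n (n i)))"
  proof -
    from BE have "\<forall>k::nat. \<exists>b r (d :: nat \<Rightarrow> rat).
       qbasis (homology_group (int k) X) b r \<and>
       (\<forall>i<r. \<forall>j<r. qmatrix (homology_group (int k) X) b r (fstar (int k) X f) i j
                      = (if i = j then d j else 0)) \<and>
       mset (map d [0..<r]) =
         image_mset (\<lambda>S. of_int (\<Prod>i\<in>S. a i)) (mset_set (Sk l n k))"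
      unfolding basic_eigenvalues_def Sk_def .
    then have "\<exists>b r (d :: nat \<Rightarrow> rat).
       qbasis G b r \<and>
       (\<forall>p<r. \<forall>q<r. qmatrix G b r (fstar (int (n i)) X f) p q
                      = (if p = q then d q else 0)) \<and>
       mset (map d [0..<r]) =
         image_mset (\<lambda>S. of_int (\<Prod>i\<in>S. a i)) (mset_set (Sk l n (n i)))"
      unfolding G_def by (rule spec)
    then show ?thesis using that by blast
  qed
  have CG: "comm_group G" unfolding G_def by (rule abelian_homology_group)
  have "{i} \<in> Sk l n (n i)" using il unfolding Sk_def by auto
  then have "of_int (a i) \<in># image_mset (\<lambda>S. of_int (\<Prod>i\<in>S. a i)) (mset_set (Sk l n (n i)))"
    using Sk_finite[of l n "n i"] unfolding in_image_mset by (simp add: rev_image_eqI)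
  then have "of_int (a i) \<in># mset (map d [0..<r])" by (simp only: ms)
  then have "of_int (a i) \<in> set (map d [0..<r])" by (simp only: in_multiset_in_set)
  then obtain j where j: "j < r" and dj: "d j = of_int (a i)" by auto
  define h where "h = fstar (int (n i)) X f"
  have hh: "h \<in> hom G G" unfolding h_def G_def by (rule hom_induced_hom)
  have B': "qbasis G (qbas G) (qrank G)" by (rule qbas_basis[OF B])
  have dh: "\<And>i' j'. i' < r \<Longrightarrow> j' < r \<Longrightarrow> qcoords G b r (h (b j')) i' = (if i' = j' then d j' else 0)"
    using dg unfolding qmatrix_def h_def by simp
  define v where "v = (\<lambda>t. (of_rat (qcoords G (qbas G) (qrank G) (b j) t) :: complex))"
  have "qeigenvalue G h (of_rat (d j))"
    unfolding qeigenvalue_def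
  proof (rule exI[where x=v], intro conjI allI impI)
    show "\<exists>t<qrank G. v t \<noteq> 0"
      using comm_group.eigvec_nonzero[OF CG B B' j] unfolding v_def by simp
    fix t assume t: "t < qrank G"
    have "(\<Sum>s<qrank G. qmatrix G (qbas G) (qrank G) h t s * qcoords G (qbas G) (qrank G) (b j) s)
        = d j * qcoords G (qbas G) (qrank G) (b j) t"
      unfolding qmatrix_def by (rule comm_group.diag_eigen[OF CG B B' hh dh j t])
    then have "of_rat (\<Sum>s<qrank G. qmatrix G (qbas G) (qrank G) h t s * qcoords G (qbas G) (qrank G) (b j) s)
        = (of_rat (d j * qcoords G (qbas G) (qrank G) (b j) t) :: complex)" by simp
    then show "(\<Sum>s<qrank G. of_rat (qmatrix G (qbas G) (qrank G) h t s) * v s) = of_rat (d j) * v t"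
      unfolding v_def by (simp add: of_rat_sum of_rat_mult)
  qed
  then obtain m :: nat where m: "m > 0" "(of_rat (d j) :: complex) ^ m = 1"
    using QU unfolding quasi_unipotent_def h_def G_def by blast
  then have "(of_int (a i) :: complex) ^ m = 1" using dj by simp
  then have "norm (of_int (a i) :: complex) = 1" using power_eq_1_iff[of "of_int (a i) :: complex" m] m(1) by simp
  then have "\<bar>real_of_int (a i)\<bar> = 1" by (simp only: norm_of_int)
  then have "\<bar>a i\<bar> = 1" by linarith
  then show ?thesis by arith
qed

lemma lef:
  assumes cont: "continuous_map X X f" and BE: "basic_eigenvalues X f l n a"
  shows "lefschetz_number X (f ^^ m) = (\<Prod>i<l. 1 + (-1) ^ (n i) * (of_int (a i)) ^ m :: rat)"
proof -
  define F where "F = (\<lambda>S. (-1) ^ (\<Sum>i\<in>S. n i) * (of_int (\<Prod>i\<in>S. a i)) ^ m :: rat)"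
  define K where "K = {k. card (Sk l n k) \<noteq> 0}"
  have K: "K = (\<lambda>S. \<Sum>i\<in>S. n i) ` Pow {..<l}"
  proof -
    have "card (Sk l n k) \<noteq> 0 \<longleftrightarrow> Sk l n k \<noteq> {}" for k using Sk_finite[of l n k] by simp
    then show ?thesis unfolding K_def Sk_def by auto
  qed
  have fK: "finite K" unfolding K by simp
  have "lefschetz_number X (f ^^ m) = (\<Sum>k\<in>K. (-1) ^ k * (\<Sum>S\<in>Sk l n k. (of_int (\<Prod>i\<in>S. a i)) ^ m))"
    unfolding lefschetz_number_def K_def using per_k[OF cont BE] by simp
  also have "\<dots> = (\<Sum>k\<in>K. \<Sum>S\<in>{S. S \<in> Pow {..<l} \<and> (\<Sum>i\<in>S. n i) = k}. F S)"
    unfolding F_def Sk_def by (intro sum.cong refl) (auto simp: sum_distrib_left intro!: sum.cong)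
  also have "\<dots> = (\<Sum>S\<in>Pow {..<l}. F S)"
    by (rule sum.group) (auto simp: fK K)
  also have "\<dots> = (\<Sum>S\<in>Pow {..<l}. (\<Prod>i\<in>S. (-1) ^ (n i) * (of_int (a i)) ^ m) * (\<Prod>i\<in>{..<l} - S. 1))"
    unfolding F_def by (intro sum.cong refl) (simp add: prod.distrib power_sum prod_power_distrib)
  also have "\<dots> = (\<Prod>i<l. (-1) ^ (n i) * (of_int (a i)) ^ m + 1)"
    by (rule prod_add[symmetric]) simp
  finally show ?thesis by (simp add: add.commute)
qed


lemma pm1_pow: "a = 1 \<or> a = -1 \<Longrightarrow> (of_int a :: rat) ^ m = (if even m then 1 else of_int a)"
  by (auto simp: minus_one_power_iff)

lemma prod_evens:
  fixes l :: nat and n :: "nat \<Rightarrow> nat"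
  assumes "\<forall>i<l. even (n i)"
  shows "(\<Prod>i<l. 1 + (-1) ^ (n i) :: rat) = 2 ^ l"
proof -
  have "(\<Prod>i<l. 1 + (-1) ^ (n i) :: rat) = (\<Prod>i<l. 2)"
    using assms by (intro prod.cong) auto
  then show ?thesis by simp
qed

lemma prod_odd:
  fixes l :: nat and n :: "nat \<Rightarrow> nat"
  assumes "i0 < l" "odd (n i0)"
  shows "(\<Prod>i<l. 1 + (-1) ^ (n i) :: rat) = 0"
proof -
  have "(1::rat) + (-1) ^ (n i0) = 0" using assms(2) by simp
  then show ?thesis using assms(1) by (subst prod_zero_iff) auto
qed

theorem lemma3p2:
  fixes l :: nat and n :: "nat \<Rightarrow> nat" and blk :: "'d::finite \<Rightarrow> nat"
    and f :: "real^'d \<Rightarrow> real^'d" and a :: "nat \<Rightarrow> int"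
  assumes "l \<ge> 1"
    and "1 \<le> n 0" and "\<forall>i. Suc i < l \<longrightarrow> n i < n (Suc i)"
    and "\<forall>d. blk d < l" and "\<forall>i<l. card {d. blk d = i} = n i + 1"
    and "C1_map_on (sphere_prod blk l) f"
    and "quasi_unipotent (top_of_set (sphere_prod blk l)) f"
    and "basic_eigenvalues (top_of_set (sphere_prod blk l)) f l n a"
  shows "((\<forall>i<l. (-1) ^ n i * a i = 1) \<longrightarrow> MPer_L (top_of_set (sphere_prod blk l)) f = {1})
    \<and> ((\<exists>i<l. (-1) ^ n i * a i = -1) \<longrightarrow> MPer_L (top_of_set (sphere_prod blk l)) f = {})"
proof -
  define X where "X = top_of_set (sphere_prod blk l)"
  have cont: "continuous_map X X f" unfolding X_def by (rule cont_f[OF assms(6)])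
  have BE: "basic_eigenvalues X f l n a" using assms(8) unfolding X_def .
  have QU: "quasi_unipotent X f" using assms(7) unfolding X_def .
  have unit: "\<And>i. i < l \<Longrightarrow> a i = 1 \<or> a i = -1" using eig_unit[OF cont BE QU] by blast
  define LL where "LL = (\<lambda>m. (\<Prod>i<l. 1 + (-1) ^ (n i) * (of_int (a i)) ^ m :: rat))"
  have zeta: "lefschetz_zeta X f = EE (gen LL)"
    unfolding lefschetz_zeta_def EE_def gen_def LL_def
    by (rule arg_cong[where f="\<lambda>g. fps_exp 1 oo g"], rule fps_ext, simp only: lef[OF cont BE] fps_nth_Abs_fps)
  have MP: "MPer_L X f = (if EE (gen LL) = 1 then {} else
      \<Inter> {set (map (\<lambda>(\<Delta>, r, m). r) rs) | rs. zeta_repr (EE (gen LL)) rs})"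
    unfolding MPer_L_def zeta ..
  define P where "P = (\<Prod>i<l. 1 + (-1) ^ (n i) :: rat)"
  have l2: "(2::rat) ^ l = 2 * of_nat (2 ^ (l - 1))"
    using assms(1) by (cases l) auto
  have l2n: "(2::rat) ^ l = of_nat (2 ^ l)" by simp
  have A: "MPer_L X f = {1}" if H: "\<forall>i<l. (-1) ^ n i * a i = 1"
  proof -
    have ai: "(of_int (a i) :: rat) = (-1) ^ n i" if "i < l" for i
    proof -
      have "(-1::int) ^ n i * ((-1) ^ n i * a i) = (-1) ^ n i" using H that by simp
      then have "a i = (-1) ^ n i" by (simp flip: mult.assoc power_mult_distrib)
      then show ?thesis by simp
    qed
    have LLm: "LL m = (if odd m then 2 ^ l else P)" for m
    proof -
      have "LL m = (\<Prod>i<l. 1 + (-1) ^ (n i) * ((-1) ^ n i) ^ m)"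
        unfolding LL_def using ai by (intro prod.cong) auto
      also have "\<dots> = (\<Prod>i<l. 1 + ((-1) ^ (n i)) ^ Suc m)" by simp
      also have "\<dots> = (if odd m then 2 ^ l else P)"
      proof (cases "odd m")
        case True
        then have "\<And>i. ((-1::rat) ^ (n i)) ^ Suc m = 1"
          by (simp add: power_mult[symmetric] minus_one_power_iff)
        then show ?thesis using True by simp
      next
        case False
        then have "\<And>i. ((-1::rat) ^ (n i)) ^ Suc m = (-1) ^ n i"
          by (simp add: power_mult[symmetric] minus_one_power_iff)
        then show ?thesis using False unfolding P_def by simp
      qed
      finally show ?thesis .
    qed
    show ?thesis
    proof (cases "\<forall>i<l. even (n i)")
      case True
      then have "P = 2 ^ l" unfolding P_def by (rule prod_evens)
      then have "\<forall>m>0. LL m = of_nat (2 ^ l)" using LLm by simp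
      then have z: "EE (gen LL) = inverse (1 - fps_X) ^ (2 ^ l)" by (rule gen_A1)
      have "fps_nth (EE (gen LL)) 1 \<noteq> 0" unfolding gen_nth1 using LLm by simp
      from MP_one[OF this, of "[(-1, 1, - int (2 ^ l))]"] repr_A1[of "2 ^ l"]
      show ?thesis unfolding MP z by simp
    next
      case False
      then obtain i0 where "i0 < l" "odd (n i0)" by auto
      then have "P = 0" unfolding P_def by (rule prod_odd)
      then have "\<forall>m>0. LL m = (if odd m then 2 * of_nat (2 ^ (l - 1)) else 0)" using LLm l2 by simp
      then have z: "EE (gen LL) = (inverse (1 - fps_X) * (1 + fps_X)) ^ (2 ^ (l - 1))" by (rule gen_A2)
      have "fps_nth (EE (gen LL)) 1 \<noteq> 0" unfolding gen_nth1 using LLm by simp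
      from MP_one[OF this, of "[(-1, 1, - int (2 ^ (l - 1))), (1, 1, int (2 ^ (l - 1)))]"] repr_A2[of "2 ^ (l - 1)"]
      show ?thesis unfolding MP z by simp
    qed
  qed
  have B: "MPer_L X f = {}" if H: "\<exists>i<l. (-1) ^ n i * a i = -1"
  proof -
    obtain i0 where i0: "i0 < l" "(-1) ^ n i0 * a i0 = -1" using H by blast
    have LLm: "LL m = (if odd m then 0 else P)" for m
    proof (cases "odd m")
      case True
      have "(1 + (-1) ^ (n i0) * (of_int (a i0)) ^ m :: rat) = 1 + of_int ((-1) ^ n i0 * a i0)"
        using pm1_pow[OF unit[OF i0(1)], of m] True by simp
      also have "\<dots> = 0" using i0(2) by simp
      finally have "LL m = 0" unfolding LL_def using i0(1) by (auto intro: bexI[of _ i0])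
      then show ?thesis using True by simp
    next
      case False
      then have "LL m = P" unfolding LL_def P_def using pm1_pow[OF unit] by (intro prod.cong) auto
      then show ?thesis using False by simp
    qed
    show ?thesis
    proof (cases "\<forall>i<l. even (n i)")
      case True
      then have "P = 2 ^ l" unfolding P_def by (rule prod_evens)
      then have "\<forall>m>0. LL m = (if even m then 2 * of_nat (2 ^ (l - 1)) else 0)" using LLm l2 by simp
      then have z: "EE (gen LL) = (inverse (1 - fps_X) * inverse (1 + fps_X)) ^ (2 ^ (l - 1))" by (rule gen_B2)
      from MP_empty[OF repr_B2a[of "2 ^ (l - 1)"] _ repr_B2b[of "2 ^ (l - 1)"]]
      show ?thesis unfolding MP z by simp
    next
      case False
      then obtain i1 where "i1 < l" "odd (n i1)" by auto
      then have "P = 0" unfolding P_def by (rule prod_odd)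
      then have "\<forall>m>0. LL m = 0" using LLm by simp
      then have "EE (gen LL) = 1" by (rule gen_B1)
      then show ?thesis unfolding MP by simp
    qed
  qed
  show ?thesis using A B unfolding X_def by blast
qed


end
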